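(* Let $n\ge1$, identify $\mathbb{R}^{n+1}=\mathbb{R}^n\times\mathbb{R}$, let $f\colon\mathbb{R}^n\to(0,\infty)$ be continuous with epigraph $L=\{(x,y)\mid f(x)\le y\}$, and let $K\subset\mathbb{R}^{n+1}$ be a nonempty closed set with $K\cap L=\emptyset$ containing a point $(x_*,y_* )$ with $y_*\le 0$. Let $G^+$, $G^-$ be the upper and lower equidistant functions associated with $K$ and $L$. Then for every $x\in\mathbb{R}^n$ and $y\in\mathbb{R}$: if $y<G^-(x)$ then $d((x,y),K)<d((x,y),L)$, and if $G^+(x)<y$ then $d((x,y),K)>d((x,y),L)$.
   Context: $d(p,A)=\inf\{|p-q|\mid q\in A\}$ (Euclidean distance). The upper and lower equidistant functions are $G^+(x)=\sup\{y\in\mathbb{R}\mid d((x,y),K)=d((x,y),L)\}$ and $G^-(x)=\inf\{y\in\mathbb{R}\mid d((x,y),K)=d((x,y),L)\}$ (under the stated assumptions these sets are nonempty and bounded, so $G^\pm(x)$ are real numbers). *)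

theory Defs
  imports "HOL-Analysis.Analysis"
begin

text \<open>Points of R^(n+1) = R^n x R are pairs; the product norm is Euclidean.
  d(p,A) is infdist p A.\<close>

definition epigraph_set :: "(real^'n \<Rightarrow> real) \<Rightarrow> ((real^'n) \<times> real) set" where
  "epigraph_set f = {(x, y). f x \<le> y}"

definition equidist_set :: "((real^'n) \<times> real) set \<Rightarrow> ((real^'n) \<times> real) set \<Rightarrow> real^'n \<Rightarrow> real set" where
  "equidist_set K L x = {y. infdist (x, y) K = infdist (x, y) L}"

definition G_plus :: "((real^'n) \<times> real) set \<Rightarrow> ((real^'n) \<times> real) set \<Rightarrow> real^'n \<Rightarrow> real" where
  "G_plus K L x = Sup (equidist_set K L x)"

definition G_minus :: "((real^'n) \<times> real) set \<Rightarrow> ((real^'n) \<times> real) set \<Rightarrow> real^'n \<Rightarrow> real" where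
  "G_minus K L x = Inf (equidist_set K L x)"

end

theory Submission
  imports Defs
begin

lemma infdist_ge_lemma:
  assumes "A \<noteq> {}" "\<And>a. a \<in> A \<Longrightarrow> m \<le> dist p a"
  shows "m \<le> infdist p A"
  using assms by (simp add: infdist_notempty cINF_greatest)

lemma lower_part:
  fixes f :: "real^'n \<Rightarrow> real" and K :: "((real^'n) \<times> real) set"
  assumes cf: "continuous_on UNIV f" and pos: "\<And>x. f x > 0"
    and inK: "(xs, ys) \<in> K" and ys: "ys \<le> 0"
  shows "\<exists>y0. \<forall>y\<le>y0. infdist (x, y) K < infdist (x, y) (epigraph_set f)"
proof -
  define D where "D = dist x xs"
  define R where "R = D + 1"
  have R0: "0 \<le> R" using zero_le_dist[of x xs] by (simp add: R_def D_def)
  have "\<exists>z\<in>cball x R. \<forall>w\<in>cball x R. f z \<le> f w"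
  proof (rule continuous_attains_inf)
    have "0 \<le> R" using zero_le_dist[of x xs] by (simp add: R_def D_def)
    then show "cball x R \<noteq> {}" by auto
  qed (auto intro: continuous_on_subset[OF cf])
  then obtain z where "\<forall>w\<in>cball x R. f z \<le> f w" by blast
  define c where "c = f z"
  have c: "c > 0" "\<And>w. dist x w \<le> R \<Longrightarrow> c \<le> f w"
    using pos \<open>\<forall>w\<in>cball x R. f z \<le> f w\<close> by (auto simp: c_def)
  define y0 where "y0 = min ys (- (D^2) / (2*c)) - 1"
  have "\<forall>y\<le>y0. infdist (x, y) K < infdist (x, y) (epigraph_set f)"
  proof (intro allI impI)
    fix y assume y: "y \<le> y0"
    have yneg: "y < 0" "y < ys" using y ys by (auto simp: y0_def)
    have y2: "y \<le> - (D^2) / (2*c) - 1" using y by (auto simp: y0_def)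
    have "- 2 * c * y \<ge> D^2 + 2*c"
    proof -
      have "2*c*y \<le> 2*c*(- (D^2) / (2*c) - 1)" using y2 c(1) by simp
      also have "\<dots> = - (D^2) - 2*c" using c(1) by (simp add: field_simps)
      finally show ?thesis by simp
    qed
    have dK: "infdist (x, y) K \<le> sqrt (D^2 + y^2)"
    proof -
      have "infdist (x, y) K \<le> dist (x, y) (xs, ys)" by (rule infdist_le[OF inK])
      also have "\<dots> = sqrt (D^2 + (dist y ys)^2)" by (simp add: dist_Pair_Pair D_def)
      also have "\<dots> \<le> sqrt (D^2 + y^2)"
      proof -
        have "(dist y ys)^2 \<le> y^2"
          unfolding dist_real_def abs_le_square_iff[symmetric] using yneg ys by linarith
        then show ?thesis by simp
      qed
      finally show ?thesis .
    qed
    have lt1: "sqrt (D^2 + y^2) < sqrt (R^2 + y^2)"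
      using D_def R_def by (simp add: power_strict_mono zero_le_dist)
    have lt2: "sqrt (D^2 + y^2) < c - y"
    proof -
      have e: "(c - y)^2 = c^2 + (- 2 * c * y) + y^2" by (simp add: power2_eq_square algebra_simps)
      have "c^2 > 0" using c(1) by simp
      then have "D^2 + y^2 < (c - y)^2" unfolding e using \<open>- 2 * c * y \<ge> D^2 + 2*c\<close> c(1) by linarith
      then have "sqrt (D^2 + y^2) < sqrt ((c - y)^2)" by (rule real_sqrt_less_mono)
      moreover have "sqrt ((c - y)^2) = c - y" using c(1) yneg by simp
      ultimately show ?thesis by simp
    qed
    have dL: "min (c - y) (sqrt (R^2 + y^2)) \<le> infdist (x, y) (epigraph_set f)"
    proof (rule infdist_ge_lemma)
      show "epigraph_set f \<noteq> {}" by (auto simp: epigraph_set_def)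
      fix a assume a: "a \<in> epigraph_set f"
      obtain x' y' where a': "a = (x', y')" "f x' \<le> y'" using a by (auto simp: epigraph_set_def)
      have y'pos: "y' > 0" using pos[of x'] a' by simp
      have dd: "dist (x, y) a = sqrt ((dist x x')^2 + (dist y y')^2)" by (simp add: a' dist_Pair_Pair)
      show "min (c - y) (sqrt (R^2 + y^2)) \<le> dist (x, y) a"
      proof (cases "dist x x' \<le> R")
        case True
        then have "c \<le> y'" using c(2) a' by force
        then have "c - y \<le> dist y y'" by (simp add: dist_real_def)
        also have "\<dots> \<le> dist (x, y) a" unfolding dd by (rule real_sqrt_sum_squares_ge2)
        finally show ?thesis by simp
      next
        case False
        have "R^2 \<le> (dist x x')^2" using False R0 power_mono[of R "dist x x'" 2] by simp
        moreover have "y^2 \<le> (dist y y')^2"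
          unfolding dist_real_def abs_le_square_iff[symmetric] using y'pos yneg by linarith
        ultimately have "sqrt (R^2 + y^2) \<le> dist (x, y) a" unfolding dd by simp
        then show ?thesis by simp
      qed
    qed
    show "infdist (x, y) K < infdist (x, y) (epigraph_set f)"
      using dK lt1 lt2 dL by linarith
  qed
  then show ?thesis by blast
qed

theorem corollary1:
  fixes f :: "real^'n \<Rightarrow> real" and K :: "((real^'n) \<times> real) set"
    and xs :: "real^'n" and ys :: real
  assumes "continuous_on UNIV f"
    and "\<And>x. f x > 0"
    and "closed K" and "K \<noteq> {}"
    and "K \<inter> epigraph_set f = {}"
    and "(xs, ys) \<in> K" and "ys \<le> 0"
  shows "\<forall>x y. (y < G_minus K (epigraph_set f) x
                   \<longrightarrow> infdist (x, y) K < infdist (x, y) (epigraph_set f))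
             \<and> (G_plus K (epigraph_set f) x < y
                   \<longrightarrow> infdist (x, y) K > infdist (x, y) (epigraph_set f))"
proof (intro allI)
  fix x :: "real^'n" and y :: real
  define L where "L = epigraph_set f"
  define h where "h t = infdist (x, t) K - infdist (x, t) L" for t
  define S where "S = equidist_set K L x"
  have S: "S = {t. h t = 0}" by (simp add: S_def equidist_set_def h_def)
  have hc: "continuous_on A h" for A
    unfolding h_def by (intro continuous_intros)
  obtain y0 where y0: "\<And>t. t \<le> y0 \<Longrightarrow> h t < 0"
    using lower_part[OF assms(1,2,6,7), of x] unfolding h_def L_def by force
  have up: "h t > 0" if "f x \<le> t" for t
  proof -
    have "(x, t) \<in> L" using that by (simp add: L_def epigraph_set_def)
    moreover then have "(x, t) \<notin> K" using assms(5) L_def by auto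
    ultimately show ?thesis using infdist_pos_not_in_closed[OF assms(3,4)] by (simp add: h_def)
  qed
  have bb: "bdd_below S" unfolding bdd_below_def
  proof (intro exI ballI)
    fix t assume "t \<in> S" then show "y0 \<le> t" using y0[of t] by (force simp: S)
  qed
  have ba: "bdd_above S" unfolding bdd_above_def
  proof (intro exI ballI)
    fix t assume "t \<in> S" then show "t \<le> f x" using up[of t] by (force simp: S)
  qed
  have P1: "h y < 0" if "y < Inf S"
  proof (rule ccontr)
    assume "\<not> h y < 0"
    then have "y0 < y" using y0[of y] by (meson not_le)
    obtain t where t: "y0 \<le> t" "t \<le> y" "h t = 0"
      using IVT'[of h y0 0 y] y0[of y0] \<open>\<not> h y < 0\<close> \<open>y0 < y\<close> hc by force
    then have "Inf S \<le> t" using bb by (simp add: S cInf_lower)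
    then show False using t that by simp
  qed
  have P2: "h y > 0" if "Sup S < y"
  proof (rule ccontr)
    assume "\<not> h y > 0"
    then have "y < f x" using up[of y] by (meson not_le)
    obtain t where t: "y \<le> t" "t \<le> f x" "h t = 0"
      using IVT'[of h y 0 "f x"] up[of "f x"] \<open>\<not> h y > 0\<close> \<open>y < f x\<close> hc by force
    then have "t \<le> Sup S" using ba by (simp add: S cSup_upper)
    then show False using t that by simp
  qed
  show "(y < G_minus K (epigraph_set f) x
                   \<longrightarrow> infdist (x, y) K < infdist (x, y) (epigraph_set f))
             \<and> (G_plus K (epigraph_set f) x < y
                   \<longrightarrow> infdist (x, y) K > infdist (x, y) (epigraph_set f))"
    using P1 P2 by (simp add: G_minus_def G_plus_def S_def L_def h_def)
qed

end
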